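(* Suppose $\{\varphi_i\}_{i=1}^N$ is a set of linearly independent unit vectors in $\mathbb{R}^N$ such that the hyperplanes $\{\varphi_i^\perp\}_{i=1}^N$ do norm retrieval in $\mathbb{R}^N$. If $x,y\in\mathbb{R}^N$ satisfy $\langle x,\varphi_i\rangle=\pm1$ and $\langle y,\varphi_i\rangle=\pm1$ for all $i\in\{1,\dots,N\}$ (with signs allowed to depend on $i$ and to differ between $x$ and $y$), then $\|x\|=\|y\|$.
   Context: For a nonzero vector $\varphi\in\mathbb{R}^N$, $\varphi^\perp=\{x\in\mathbb{R}^N:\langle x,\varphi\rangle=0\}$. A family of subspaces $\{W_i\}_{i=1}^M$ of $\mathbb{R}^N$ with orthogonal projections $\{P_i\}_{i=1}^M$ does norm retrieval if for all $x,y\in\mathbb{R}^N$, $\|P_ix\|=\|P_iy\|$ for all $i$ implies $\|x\|=\|y\|$. *)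

theory Defs
  imports "HOL-Analysis.Analysis"
begin

definition orth_proj :: "('a::euclidean_space) set \<Rightarrow> 'a \<Rightarrow> 'a" where
  "orth_proj W x = (THE p. p \<in> W \<and> (\<forall>w\<in>W. inner (x - p) w = 0))"

definition perp_hyperplane :: "('a::euclidean_space) \<Rightarrow> 'a set" where
  "perp_hyperplane \<phi> = {x. inner x \<phi> = 0}"

definition does_norm_retrieval :: "'i set \<Rightarrow> ('i \<Rightarrow> ('a::euclidean_space) set) \<Rightarrow> bool" where
  "does_norm_retrieval I W \<longleftrightarrow>
     (\<forall>x y. (\<forall>i\<in>I. norm (orth_proj (W i) x) = norm (orth_proj (W i) y)) \<longrightarrow> norm x = norm y)"

end

theory Submission
  imports Defs
begin

lemma proj_eq:
  fixes \<phi> z :: "'a::euclidean_space"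
  assumes "norm \<phi> = 1"
  shows "orth_proj (perp_hyperplane \<phi>) z = z - inner z \<phi> *\<^sub>R \<phi>"
proof -
  have pp: "inner \<phi> \<phi> = 1" using assms by (simp add: dot_square_norm)
  let ?p = "z - inner z \<phi> *\<^sub>R \<phi>"
  have mem: "?p \<in> perp_hyperplane \<phi>"
    unfolding perp_hyperplane_def using pp by (simp add: inner_diff_left)
  have orth: "\<forall>w\<in>perp_hyperplane \<phi>. inner (z - ?p) w = 0"
    unfolding perp_hyperplane_def by (simp add: inner_commute)
  show ?thesis unfolding orth_proj_def
  proof (rule the_equality)
    show "?p \<in> perp_hyperplane \<phi> \<and> (\<forall>w\<in>perp_hyperplane \<phi>. inner (z - ?p) w = 0)"
      using mem orth by blast
  next
    fix p assume h: "p \<in> perp_hyperplane \<phi> \<and> (\<forall>w\<in>perp_hyperplane \<phi>. inner (z - p) w = 0)"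
    have d: "p - ?p \<in> perp_hyperplane \<phi>" using h mem
      unfolding perp_hyperplane_def by (simp add: inner_diff_left)
    have "inner (z - p) (p - ?p) = 0" using h d by blast
    moreover have "inner (z - ?p) (p - ?p) = 0" using orth d by blast
    ultimately have "inner (p - ?p) (p - ?p) = 0"
      by (simp add: inner_diff_left inner_diff_right algebra_simps)
    then show "p = ?p" by simp
  qed
qed

lemma proj_norm2:
  fixes \<phi> z :: "'a::euclidean_space"
  assumes "norm \<phi> = 1"
  shows "(norm (orth_proj (perp_hyperplane \<phi>) z))^2 = (norm z)^2 - (inner z \<phi>)^2"
proof -
  have pp: "inner \<phi> \<phi> = 1" using assms by (simp add: dot_square_norm)
  have "(norm (z - inner z \<phi> *\<^sub>R \<phi>))^2 = inner (z - inner z \<phi> *\<^sub>R \<phi>) (z - inner z \<phi> *\<^sub>R \<phi>)"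
    by (simp add: dot_square_norm)
  also have "\<dots> = inner z z - (inner z \<phi>)^2"
    using pp by (simp add: inner_diff_left inner_diff_right inner_commute power2_eq_square)
  finally show ?thesis using proj_eq[OF assms] by (simp add: dot_square_norm)
qed

theorem mainTheorem4:
  fixes \<phi> :: "'n::finite \<Rightarrow> real^'n" and x y :: "real^'n"
  assumes indep: "inj \<phi>" "independent (range \<phi>)"
    and unit: "\<And>i. norm (\<phi> i) = 1"
    and nr: "does_norm_retrieval UNIV (\<lambda>i. perp_hyperplane (\<phi> i))"
    and hx: "\<And>i. inner x (\<phi> i) = 1 \<or> inner x (\<phi> i) = -1"
    and hy: "\<And>i. inner y (\<phi> i) = 1 \<or> inner y (\<phi> i) = -1"
  shows "norm x = norm y"
proof -
  define a where "a = sqrt ((norm y)^2 - 1)"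
  define b where "b = sqrt ((norm x)^2 - 1)"
  obtain i0 :: 'n where True by blast
  have ny: "1 \<le> norm y"
    using Cauchy_Schwarz_ineq2[of y "\<phi> i0"] hy[of i0] unit[of i0] by auto
  have nx: "1 \<le> norm x"
    using Cauchy_Schwarz_ineq2[of x "\<phi> i0"] hx[of i0] unit[of i0] by auto
  have ny2: "1 \<le> (norm y)^2" using ny by (simp add: one_le_power)
  have nx2: "1 \<le> (norm x)^2" using nx by (simp add: one_le_power)
  have a2: "a^2 = (norm y)^2 - 1" unfolding a_def using ny2 by simp
  have b2: "b^2 = (norm x)^2 - 1" unfolding b_def using nx2 by simp
  have sx: "(inner x (\<phi> i))^2 = 1" for i using hx[of i] by auto
  have sy: "(inner y (\<phi> i))^2 = 1" for i using hy[of i] by auto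
  have "norm (orth_proj (perp_hyperplane (\<phi> i)) (a *\<^sub>R x)) =
        norm (orth_proj (perp_hyperplane (\<phi> i)) (b *\<^sub>R y))" for i
  proof -
    have "(norm (orth_proj (perp_hyperplane (\<phi> i)) (a *\<^sub>R x)))^2 = a^2 * ((norm x)^2 - 1)"
      using proj_norm2[OF unit[of i], of "a *\<^sub>R x"] sx[of i]
      by (simp add: power_mult_distrib algebra_simps)
    moreover have "(norm (orth_proj (perp_hyperplane (\<phi> i)) (b *\<^sub>R y)))^2 = b^2 * ((norm y)^2 - 1)"
      using proj_norm2[OF unit[of i], of "b *\<^sub>R y"] sy[of i]
      by (simp add: power_mult_distrib algebra_simps)
    ultimately show ?thesis using a2 b2
      by (metis mult.commute norm_ge_zero power2_eq_imp_eq)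
  qed
  then have "norm (a *\<^sub>R x) = norm (b *\<^sub>R y)"
    using nr unfolding does_norm_retrieval_def by blast
  then have "(norm (a *\<^sub>R x))^2 = (norm (b *\<^sub>R y))^2" by simp
  then have "a^2 * (norm x)^2 = b^2 * (norm y)^2"
    by (simp add: power_mult_distrib)
  then have "((norm y)^2 - 1) * (norm x)^2 = ((norm x)^2 - 1) * (norm y)^2"
    using a2 b2 by simp
  then have "(norm x)^2 = (norm y)^2" by (simp add: algebra_simps)
  then show ?thesis by (metis norm_ge_zero power2_eq_imp_eq)
qed

end
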